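(* Let $G$ be a directed po-group satisfying RDP (respectively RDP$_1$). Then the pseudo effect algebra $\Gamma(\mathbb Z \overrightarrow{\times} G,(1,0))$ satisfies RDP (respectively RDP$_1$).
   Context: A po-group is a (not necessarily Abelian, additively written) group with a partial order $\le$ such that $a\le b$ implies $x+a+y\le x+b+y$; $G^+$ is its positive cone; $G$ is directed if any two elements have a common upper bound. $\mathbb Z \overrightarrow{\times} G$ is the group $\mathbb Z\times G$ (componentwise operation) with the lexicographic order: $(m,g)\le(n,h)$ iff $m<n$, or $m=n$ and $g\le h$. For a po-group $H$ and $u\in H^+$ a strong unit (for each $h\in H$ there is $k\ge1$ with $h\le ku$), $\Gamma(H,u)=\{h\in H:0\le h\le u\}$ is a pseudo effect algebra with constants $0,u$ and partial addition: $a+b$ is defined (and equals the group sum) iff $a+b\le u$. $(1,0)$ is a strong unit of $\mathbb Z \overrightarrow{\times} G$. RDP for a po-group $G$: for all $a_1,a_2,b_1,b_2\in G^+$ with $a_1+a_2=b_1+b_2$ there are $c_{11},c_{12},c_{21},c_{22}\in G^+$ with $a_1=c_{11}+c_{12}$, $a_2=c_{21}+c_{22}$, $b_1=c_{11}+c_{21}$, $b_2=c_{12}+c_{22}$; RDP$_1$ additionally requires that $0\le x\le c_{12}$, $0\le y\le c_{21}$ imply $x+y=y+x$. RDP and RDP$_1$ for a pseudo effect algebra $E$ are defined identically, with $G^+$ replaced by $E$ and all sums required to be defined in $E$. *)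

theory Defs
  imports Main "HOL-Library.Product_Plus"
begin

definition po_group :: "('a::group_add \<Rightarrow> 'a \<Rightarrow> bool) \<Rightarrow> bool" where
  "po_group le \<longleftrightarrow>
     (\<forall>a. le a a) \<and> (\<forall>a b c. le a b \<longrightarrow> le b c \<longrightarrow> le a c) \<and>
     (\<forall>a b. le a b \<longrightarrow> le b a \<longrightarrow> a = b) \<and>
     (\<forall>a b x y. le a b \<longrightarrow> le (x + a + y) (x + b + y))"

definition directed :: "('a \<Rightarrow> 'a \<Rightarrow> bool) \<Rightarrow> bool" where
  "directed le \<longleftrightarrow> (\<forall>a b. \<exists>c. le a c \<and> le b c)"

definition RDP_grp :: "('a::group_add \<Rightarrow> 'a \<Rightarrow> bool) \<Rightarrow> bool" where
  "RDP_grp le \<longleftrightarrow> (\<forall>a1 a2 b1 b2. le 0 a1 \<longrightarrow> le 0 a2 \<longrightarrow> le 0 b1 \<longrightarrow> le 0 b2 \<longrightarrow>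
      a1 + a2 = b1 + b2 \<longrightarrow>
      (\<exists>c11 c12 c21 c22. le 0 c11 \<and> le 0 c12 \<and> le 0 c21 \<and> le 0 c22 \<and>
         a1 = c11 + c12 \<and> a2 = c21 + c22 \<and> b1 = c11 + c21 \<and> b2 = c12 + c22))"

definition RDP1_grp :: "('a::group_add \<Rightarrow> 'a \<Rightarrow> bool) \<Rightarrow> bool" where
  "RDP1_grp le \<longleftrightarrow> (\<forall>a1 a2 b1 b2. le 0 a1 \<longrightarrow> le 0 a2 \<longrightarrow> le 0 b1 \<longrightarrow> le 0 b2 \<longrightarrow>
      a1 + a2 = b1 + b2 \<longrightarrow>
      (\<exists>c11 c12 c21 c22. le 0 c11 \<and> le 0 c12 \<and> le 0 c21 \<and> le 0 c22 \<and>
         a1 = c11 + c12 \<and> a2 = c21 + c22 \<and> b1 = c11 + c21 \<and> b2 = c12 + c22 \<and>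
         (\<forall>x y. le 0 x \<longrightarrow> le x c12 \<longrightarrow> le 0 y \<longrightarrow> le y c21 \<longrightarrow> x + y = y + x)))"

text \<open>Lexicographic order on Z x G (the group Z x G with componentwise operation
is the product group from Product_Plus).\<close>
definition lex_le :: "('a \<Rightarrow> 'a \<Rightarrow> bool) \<Rightarrow> int \<times> 'a \<Rightarrow> int \<times> 'a \<Rightarrow> bool" where
  "lex_le le p q \<longleftrightarrow> fst p < fst q \<or> (fst p = fst q \<and> le (snd p) (snd q))"

definition gamma_carrier :: "('b::group_add \<Rightarrow> 'b \<Rightarrow> bool) \<Rightarrow> 'b \<Rightarrow> 'b set" where
  "gamma_carrier le u = {h. le 0 h \<and> le h u}"

definition gamma_add :: "('b::group_add \<Rightarrow> 'b \<Rightarrow> bool) \<Rightarrow> 'b \<Rightarrow> 'b \<Rightarrow> 'b \<Rightarrow> 'b option" where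
  "gamma_add le u a b = (if le (a + b) u then Some (a + b) else None)"

definition pea_le :: "'b set \<Rightarrow> ('b \<Rightarrow> 'b \<Rightarrow> 'b option) \<Rightarrow> 'b \<Rightarrow> 'b \<Rightarrow> bool" where
  "pea_le E padd x z \<longleftrightarrow> (\<exists>c\<in>E. padd x c = Some z)"

definition RDP_pea :: "'b set \<Rightarrow> ('b \<Rightarrow> 'b \<Rightarrow> 'b option) \<Rightarrow> bool" where
  "RDP_pea E padd \<longleftrightarrow> (\<forall>a1\<in>E. \<forall>a2\<in>E. \<forall>b1\<in>E. \<forall>b2\<in>E. \<forall>s.
      padd a1 a2 = Some s \<longrightarrow> padd b1 b2 = Some s \<longrightarrow>
      (\<exists>c11\<in>E. \<exists>c12\<in>E. \<exists>c21\<in>E. \<exists>c22\<in>E.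
         padd c11 c12 = Some a1 \<and> padd c21 c22 = Some a2 \<and>
         padd c11 c21 = Some b1 \<and> padd c12 c22 = Some b2))"

definition RDP1_pea :: "'b set \<Rightarrow> ('b \<Rightarrow> 'b \<Rightarrow> 'b option) \<Rightarrow> bool" where
  "RDP1_pea E padd \<longleftrightarrow> (\<forall>a1\<in>E. \<forall>a2\<in>E. \<forall>b1\<in>E. \<forall>b2\<in>E. \<forall>s.
      padd a1 a2 = Some s \<longrightarrow> padd b1 b2 = Some s \<longrightarrow>
      (\<exists>c11\<in>E. \<exists>c12\<in>E. \<exists>c21\<in>E. \<exists>c22\<in>E.
         padd c11 c12 = Some a1 \<and> padd c21 c22 = Some a2 \<and>
         padd c11 c21 = Some b1 \<and> padd c12 c22 = Some b2 \<and>
         (\<forall>x\<in>E. \<forall>y\<in>E. pea_le E padd x c12 \<longrightarrow> pea_le E padd y c21 \<longrightarrow>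
            padd x y \<noteq> None \<and> padd x y = padd y x)))"

end

theory Submission
  imports Defs
begin

lemma mem_E:
  fixes p :: "int \<times> 'a::group_add"
  shows "p \<in> gamma_carrier (lex_le le) (1,0) \<longleftrightarrow>
    (fst p = 0 \<and> le 0 (snd p)) \<or> (fst p = 1 \<and> le (snd p) 0)"
  by (auto simp: gamma_carrier_def lex_le_def)

lemma padd_intro:
  "a \<in> gamma_carrier le u \<Longrightarrow> c + d = a \<Longrightarrow> gamma_add le u c d = Some a"
  by (auto simp: gamma_carrier_def gamma_add_def)

lemma po_facts:
  assumes "po_group le"
  shows "le a a" "le a b \<Longrightarrow> le b c \<Longrightarrow> le a c" "le a b \<Longrightarrow> le b a \<Longrightarrow> a = b"
    "le a b \<Longrightarrow> le (x + a) (x + b)" "le a b \<Longrightarrow> le (a + y) (b + y)"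
proof -
  show "le a a" "le a b \<Longrightarrow> le b c \<Longrightarrow> le a c" "le a b \<Longrightarrow> le b a \<Longrightarrow> a = b"
    using assms unfolding po_group_def by blast+
  show "le a b \<Longrightarrow> le (x + a) (x + b)"
    using assms unfolding po_group_def by (metis add_0_right)
  show "le a b \<Longrightarrow> le (a + y) (b + y)"
    using assms unfolding po_group_def by (metis add_0_left)
qed

lemma core:
  fixes le :: "'a::group_add \<Rightarrow> 'a \<Rightarrow> bool"
  assumes po: "po_group le" and dir: "directed le"
  and R0: "\<forall>a1 a2 b1 b2. le 0 a1 \<longrightarrow> le 0 a2 \<longrightarrow> le 0 b1 \<longrightarrow> le 0 b2 \<longrightarrow> a1+a2=b1+b2 \<longrightarrow>
     (\<exists>c11 c12 c21 c22. le 0 c11 \<and> le 0 c12 \<and> le 0 c21 \<and> le 0 c22 \<and>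
       a1 = c11+c12 \<and> a2 = c21+c22 \<and> b1 = c11+c21 \<and> b2 = c12+c22 \<and> Q c12 c21)"
  and a1: "a1 \<in> gamma_carrier (lex_le le) (1,0)"
  and a2: "a2 \<in> gamma_carrier (lex_le le) (1,0)"
  and b1: "b1 \<in> gamma_carrier (lex_le le) (1,0)"
  and b2: "b2 \<in> gamma_carrier (lex_le le) (1,0)"
  and sum: "a1 + a2 = b1 + b2" and su: "lex_le le (a1+a2) (1,0)"
  shows "\<exists>c11 c12 c21 c22. c11 \<in> gamma_carrier (lex_le le) (1,0) \<and> c12 \<in> gamma_carrier (lex_le le) (1,0)
     \<and> c21 \<in> gamma_carrier (lex_le le) (1,0) \<and> c22 \<in> gamma_carrier (lex_le le) (1,0) \<and>
     c11+c12=a1 \<and> c21+c22=a2 \<and> c11+c21=b1 \<and> c12+c22=b2 \<and>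
     ((fst c12 = 0 \<and> fst c21 = 0 \<and> Q (snd c12) (snd c21)) \<or> c12 = 0 \<or> c21 = 0)"
proof -
  note P = po_facts[OF po]
  note R = R0[rule_format]
  obtain m1 x1 where A1: "a1 = (m1,x1)" by fastforce
  obtain m2 x2 where A2: "a2 = (m2,x2)" by fastforce
  obtain n1 y1 where B1: "b1 = (n1,y1)" by fastforce
  obtain n2 y2 where B2: "b2 = (n2,y2)" by fastforce
  have ma1: "(m1 = 0 \<and> le 0 x1) \<or> (m1 = 1 \<and> le x1 0)" using a1 A1 by (simp add: mem_E)
  have ma2: "(m2 = 0 \<and> le 0 x2) \<or> (m2 = 1 \<and> le x2 0)" using a2 A2 by (simp add: mem_E)
  have mb1: "(n1 = 0 \<and> le 0 y1) \<or> (n1 = 1 \<and> le y1 0)" using b1 B1 by (simp add: mem_E)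
  have mb2: "(n2 = 0 \<and> le 0 y2) \<or> (n2 = 1 \<and> le y2 0)" using b2 B2 by (simp add: mem_E)
  have eqm: "m1+m2 = n1+n2" and eqx: "x1+x2 = y1+y2" using sum A1 A2 B1 B2 by simp_all
  have su': "m1+m2 < 1 \<or> (m1+m2 = 1 \<and> le (x1+x2) 0)" using su A1 A2 by (simp add: lex_le_def)
  have "(m1=0 \<and> m2=0 \<and> n1=0 \<and> n2=0) \<or> (m1=1 \<and> m2=0 \<and> n1=1 \<and> n2=0) \<or>
        (m1=1 \<and> m2=0 \<and> n1=0 \<and> n2=1) \<or> (m1=0 \<and> m2=1 \<and> n1=1 \<and> n2=0) \<or>
        (m1=0 \<and> m2=1 \<and> n1=0 \<and> n2=1)"
    using ma1 ma2 mb1 mb2 eqm su' by auto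
  then show ?thesis
  proof (elim disjE conjE)
    assume h: "m1 = 0" "m2 = 0" "n1 = 0" "n2 = 0"
    then have "le 0 x1" "le 0 x2" "le 0 y1" "le 0 y2" using ma1 ma2 mb1 mb2 by auto
    then obtain d11 d12 d21 d22 where d: "le 0 d11" "le 0 d12" "le 0 d21" "le 0 d22"
      "x1 = d11+d12" "x2 = d21+d22" "y1 = d11+d21" "y2 = d12+d22" "Q d12 d21"
      using R[of x1 x2 y1 y2] eqx by blast
    show ?thesis
      by (rule exI[of _ "(0,d11)"], rule exI[of _ "(0,d12)"], rule exI[of _ "(0,d21)"],
          rule exI[of _ "(0,d22)"]) (simp add: mem_E d h A1 A2 B1 B2)
  next
    assume h: "m1 = 1" "m2 = 0" "n1 = 1" "n2 = 0"
    then have l: "le x1 0" "le 0 x2" "le y1 0" "le 0 y2" using ma1 ma2 mb1 mb2 by auto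
    obtain w where w: "le (-x1) w" "le (-y1) w" using dir unfolding directed_def by blast
    have p1: "le 0 (w+x1)" using P(5)[OF w(1), of x1] by simp
    have p2: "le 0 (w+y1)" using P(5)[OF w(2), of y1] by simp
    have e: "(w+x1)+x2 = (w+y1)+y2" using eqx by (simp add: add.assoc)
    obtain d11 d12 d21 d22 where d: "le 0 d11" "le 0 d12" "le 0 d21" "le 0 d22"
      "w+x1 = d11+d12" "x2 = d21+d22" "w+y1 = d11+d21" "y2 = d12+d22" "Q d12 d21"
      using R[OF p1 l(2) p2 l(4) e] by blast
    have "le d11 (w+x1)" using P(4)[OF d(2), of d11] d(5) by simp
    moreover have "le (w+x1) w" using P(4)[OF l(1), of w] by simp
    ultimately have "le d11 w" using P(2) by blast
    then have neg: "le (-w + d11) 0" using P(4)[of d11 w "-w"] by simp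
    have q1: "-w + d11 + d12 = x1"
      by (metis add.assoc add_minus_cancel d(5))
    have q2: "-w + d11 + d21 = y1"
      by (metis add.assoc add_minus_cancel d(7))
    show ?thesis
      by (rule exI[of _ "(1,-w+d11)"], rule exI[of _ "(0,d12)"], rule exI[of _ "(0,d21)"],
          rule exI[of _ "(0,d22)"]) (simp add: mem_E d h A1 A2 B1 B2 neg q1 q2)
  next
    assume h: "m1 = 1" "m2 = 0" "n1 = 0" "n2 = 1"
    then have l: "le x1 0" "le 0 x2" "le 0 y1" "le y2 0" using ma1 ma2 mb1 mb2 by auto
    have "le (-y1 + x1) (-y1)" using P(4)[OF l(1), of "-y1"] by simp
    moreover have "le (-y1) 0" using P(4)[OF l(3), of "-y1"] by simp
    ultimately have neg: "le (-y1 + x1) 0" using P(2) by blast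
    have q: "-y1 + (x1 + x2) = y2" by (simp add: eqx)
    show ?thesis
      by (rule exI[of _ "(0,y1)"], rule exI[of _ "(1,-y1+x1)"], rule exI[of _ "0"],
          rule exI[of _ "(0,x2)"]) (simp add: mem_E h A1 A2 B1 B2 neg q l P(1) add.assoc)
  next
    assume h: "m1 = 0" "m2 = 1" "n1 = 1" "n2 = 0"
    then have l: "le 0 x1" "le x2 0" "le y1 0" "le 0 y2" using ma1 ma2 mb1 mb2 by auto
    have "le (-x1 + y1) (-x1)" using P(4)[OF l(3), of "-x1"] by simp
    moreover have "le (-x1) 0" using P(4)[OF l(1), of "-x1"] by simp
    ultimately have neg: "le (-x1 + y1) 0" using P(2) by blast
    have q: "-x1 + (y1 + y2) = x2" by (simp flip: eqx)
    show ?thesis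
      by (rule exI[of _ "(0,x1)"], rule exI[of _ "0"], rule exI[of _ "(1,-x1+y1)"],
          rule exI[of _ "(0,y2)"]) (simp add: mem_E h A1 A2 B1 B2 neg q l P(1) add.assoc)
  next
    assume h: "m1 = 0" "m2 = 1" "n1 = 0" "n2 = 1"
    then have l: "le 0 x1" "le x2 0" "le 0 y1" "le y2 0" using ma1 ma2 mb1 mb2 by auto
    obtain w where w: "le (-x2) w" "le (-y2) w" using dir unfolding directed_def by blast
    have p1: "le 0 (x2+w)" using P(4)[OF w(1), of x2] by simp
    have p2: "le 0 (y2+w)" using P(4)[OF w(2), of y2] by simp
    have e: "x1+(x2+w) = y1+(y2+w)" using eqx by (simp flip: add.assoc)
    obtain d11 d12 d21 d22 where d: "le 0 d11" "le 0 d12" "le 0 d21" "le 0 d22"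
      "x1 = d11+d12" "x2+w = d21+d22" "y1 = d11+d21" "y2+w = d12+d22" "Q d12 d21"
      using R[OF l(1) p1 l(3) p2 e] by blast
    have "le d22 (x2+w)" using P(5)[OF d(3), of d22] d(6) by simp
    moreover have "le (x2+w) w" using P(5)[OF l(2), of w] by simp
    ultimately have "le d22 w" using P(2) by blast
    then have neg: "le (d22 + -w) 0" using P(5)[of d22 w "-w"] by simp
    have q1: "d21 + (d22 + -w) = x2"
      by (metis add.assoc add.right_inverse add_0_right d(6))
    have q2: "d12 + (d22 + -w) = y2"
      by (metis add.assoc add.right_inverse add_0_right d(8))
    show ?thesis
      by (rule exI[of _ "(0,d11)"], rule exI[of _ "(0,d12)"], rule exI[of _ "(0,d21)"],
          rule exI[of _ "(1,d22 + -w)"]) (simp add: mem_E d h A1 A2 B1 B2 neg q1 q2 del: diff_conv_add_uminus add_uminus_conv_diff)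
  qed
qed


lemma comm:
  fixes le :: "'a::group_add \<Rightarrow> 'a \<Rightarrow> bool"
  defines "E \<equiv> gamma_carrier (lex_le le) (1::int, 0::'a)"
  defines "pa \<equiv> gamma_add (lex_le le) (1::int, 0::'a)"
  assumes po: "po_group le"
  and disj: "(fst c12 = 0 \<and> fst c21 = 0 \<and>
      (\<forall>x y. le 0 x \<longrightarrow> le x (snd c12) \<longrightarrow> le 0 y \<longrightarrow> le y (snd c21) \<longrightarrow> x + y = y + x))
      \<or> c12 = 0 \<or> c21 = 0"
  and x: "x \<in> E" and y: "y \<in> E"
  and px: "pea_le E pa x c12" and py: "pea_le E pa y c21"
  shows "pa x y \<noteq> None \<and> pa x y = pa y x"
proof -
  note P = po_facts[OF po]
  have zero: "z = 0" if zz: "z \<in> E" "pea_le E pa z 0" for z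
  proof -
    obtain c where c: "c \<in> E" "pa z c = Some 0" using zz(2) unfolding pea_le_def by blast
    have s: "z + c = 0" using c(2) unfolding pa_def gamma_add_def by (auto split: if_splits)
    have f: "fst z = 0" "fst c = 0" using zz(1) c(1) s unfolding E_def mem_E
      by (auto simp: prod_eq_iff)
    have "le 0 (snd z)" "le 0 (snd c)" using zz(1) c(1) f unfolding E_def mem_E by auto
    moreover have "snd z + snd c = 0" using s by (simp add: prod_eq_iff)
    ultimately have "le (snd z) 0" using P(4)[of 0 "snd c" "snd z"] by simp
    with \<open>le 0 (snd z)\<close> have "snd z = 0" using P(3) by blast
    with f show ?thesis by (simp add: prod_eq_iff)
  qed
  have idl: "pa 0 z = Some z" "pa z 0 = Some z" if "z \<in> E" for z
    using that unfolding pa_def E_def gamma_add_def gamma_carrier_def by auto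
  from disj consider (a) "fst c12 = 0" "fst c21 = 0"
      "\<forall>x y. le 0 x \<longrightarrow> le x (snd c12) \<longrightarrow> le 0 y \<longrightarrow> le y (snd c21) \<longrightarrow> x + y = y + x"
    | (b) "c12 = 0" | (c) "c21 = 0" by blast
  then show ?thesis
  proof cases
    case b
    then have "x = 0" using zero x px by simp
    then show ?thesis using idl y by simp
  next
    case c
    then have "y = 0" using zero y py by simp
    then show ?thesis using idl x by simp
  next
    case a
    have bnd: "fst z = 0 \<and> le 0 (snd z) \<and> le (snd z) (snd w)"
      if zz: "z \<in> E" "pea_le E pa z w" "fst w = 0" for z w
    proof -
      obtain c where c: "c \<in> E" "pa z c = Some w" using zz(2) unfolding pea_le_def by blast
      have s: "z + c = w" using c(2) unfolding pa_def gamma_add_def by (auto split: if_splits)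
      have f: "fst z = 0" "fst c = 0" using zz(1,3) c(1) s unfolding E_def mem_E
        by (auto simp: prod_eq_iff)
      have "le 0 (snd z)" "le 0 (snd c)" using zz(1) c(1) f unfolding E_def mem_E by auto
      moreover have "snd z + snd c = snd w" using s by (simp add: prod_eq_iff)
      ultimately show ?thesis using P(4)[of 0 "snd c" "snd z"] f by simp
    qed
    have bx: "fst x = 0" "le 0 (snd x)" "le (snd x) (snd c12)" using bnd[OF x px a(1)] by auto
    have by': "fst y = 0" "le 0 (snd y)" "le (snd y) (snd c21)" using bnd[OF y py a(2)] by auto
    have cm: "snd x + snd y = snd y + snd x" using a(3) bx by' by blast
    have "x + y = y + x" using cm bx(1) by'(1) by (simp add: prod_eq_iff)
    moreover have "lex_le le (x + y) (1,0)" using bx(1) by'(1) by (simp add: lex_le_def)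
    ultimately show ?thesis unfolding pa_def gamma_add_def by simp
  qed
qed

theorem proposition3p3:
  fixes le :: "'a::group_add \<Rightarrow> 'a \<Rightarrow> bool"
  assumes "po_group le" and "directed le"
  shows "(RDP_grp le \<longrightarrow>
            RDP_pea (gamma_carrier (lex_le le) (1, 0)) (gamma_add (lex_le le) (1, 0))) \<and>
         (RDP1_grp le \<longrightarrow>
            RDP1_pea (gamma_carrier (lex_le le) (1, 0)) (gamma_add (lex_le le) (1, 0)))"
proof (intro conjI impI)
  have sm: "s = a + b \<and> lex_le le (a + b) (1,0)"
    if "gamma_add (lex_le le) (1, 0) a b = Some s" for a b s :: "int \<times> 'a"
    using that unfolding gamma_add_def by (auto split: if_splits)
  assume r: "RDP_grp le"
  show "RDP_pea (gamma_carrier (lex_le le) (1, 0)) (gamma_add (lex_le le) (1, 0))"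
    unfolding RDP_pea_def
  proof (intro ballI allI impI)
    fix a1 a2 b1 b2 s
    assume m: "a1 \<in> gamma_carrier (lex_le le) (1, 0)" "a2 \<in> gamma_carrier (lex_le le) (1, 0)"
      "b1 \<in> gamma_carrier (lex_le le) (1, 0)" "b2 \<in> gamma_carrier (lex_le le) (1, 0)"
      and sa: "gamma_add (lex_le le) (1, 0) a1 a2 = Some s"
      and sb: "gamma_add (lex_le le) (1, 0) b1 b2 = Some s"
    have R: "\<forall>a1 a2 b1 b2. le 0 a1 \<longrightarrow> le 0 a2 \<longrightarrow> le 0 b1 \<longrightarrow> le 0 b2 \<longrightarrow> a1+a2=b1+b2 \<longrightarrow>
     (\<exists>c11 c12 c21 c22. le 0 c11 \<and> le 0 c12 \<and> le 0 c21 \<and> le 0 c22 \<and>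
       a1 = c11+c12 \<and> a2 = c21+c22 \<and> b1 = c11+c21 \<and> b2 = c12+c22 \<and> (\<lambda>_ _. True) c12 c21)"
      using r unfolding RDP_grp_def by simp
    have sum: "a1 + a2 = b1 + b2" and su: "lex_le le (a1+a2) (1,0)" using sm[OF sa] sm[OF sb] by auto
    from core[where Q="\<lambda>_ _. True", OF assms R m sum su] obtain c11 c12 c21 c22 where
      c: "c11 \<in> gamma_carrier (lex_le le) (1,0)" "c12 \<in> gamma_carrier (lex_le le) (1,0)"
     "c21 \<in> gamma_carrier (lex_le le) (1,0)" "c22 \<in> gamma_carrier (lex_le le) (1,0)"
     "c11+c12=a1" "c21+c22=a2" "c11+c21=b1" "c12+c22=b2" by metis
    show "\<exists>c11\<in>gamma_carrier (lex_le le) (1, 0). \<exists>c12\<in>gamma_carrier (lex_le le) (1, 0).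
       \<exists>c21\<in>gamma_carrier (lex_le le) (1, 0). \<exists>c22\<in>gamma_carrier (lex_le le) (1, 0).
         gamma_add (lex_le le) (1, 0) c11 c12 = Some a1 \<and> gamma_add (lex_le le) (1, 0) c21 c22 = Some a2 \<and>
         gamma_add (lex_le le) (1, 0) c11 c21 = Some b1 \<and> gamma_add (lex_le le) (1, 0) c12 c22 = Some b2"
      using c(1-4) padd_intro[OF m(1) c(5)] padd_intro[OF m(2) c(6)]
        padd_intro[OF m(3) c(7)] padd_intro[OF m(4) c(8)] by blast
  qed
next
  have sm: "s = a + b \<and> lex_le le (a + b) (1,0)"
    if "gamma_add (lex_le le) (1, 0) a b = Some s" for a b s :: "int \<times> 'a"
    using that unfolding gamma_add_def by (auto split: if_splits)
  assume r: "RDP1_grp le"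
  show "RDP1_pea (gamma_carrier (lex_le le) (1, 0)) (gamma_add (lex_le le) (1, 0))"
    unfolding RDP1_pea_def
  proof (intro ballI allI impI)
    fix a1 a2 b1 b2 s
    assume m: "a1 \<in> gamma_carrier (lex_le le) (1, 0)" "a2 \<in> gamma_carrier (lex_le le) (1, 0)"
      "b1 \<in> gamma_carrier (lex_le le) (1, 0)" "b2 \<in> gamma_carrier (lex_le le) (1, 0)"
      and sa: "gamma_add (lex_le le) (1, 0) a1 a2 = Some s"
      and sb: "gamma_add (lex_le le) (1, 0) b1 b2 = Some s"
    have R: "\<forall>a1 a2 b1 b2. le 0 a1 \<longrightarrow> le 0 a2 \<longrightarrow> le 0 b1 \<longrightarrow> le 0 b2 \<longrightarrow> a1+a2=b1+b2 \<longrightarrow>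
     (\<exists>c11 c12 c21 c22. le 0 c11 \<and> le 0 c12 \<and> le 0 c21 \<and> le 0 c22 \<and>
       a1 = c11+c12 \<and> a2 = c21+c22 \<and> b1 = c11+c21 \<and> b2 = c12+c22 \<and>
       (\<lambda>p q. \<forall>x y. le 0 x \<longrightarrow> le x p \<longrightarrow> le 0 y \<longrightarrow> le y q \<longrightarrow> x + y = y + x) c12 c21)"
      using r unfolding RDP1_grp_def by simp
    have sum: "a1 + a2 = b1 + b2" and su: "lex_le le (a1+a2) (1,0)" using sm[OF sa] sm[OF sb] by auto
    from core[where Q="\<lambda>p q. \<forall>x y. le 0 x \<longrightarrow> le x p \<longrightarrow> le 0 y \<longrightarrow> le y q \<longrightarrow> x + y = y + x", OF assms R m sum su] obtain c11 c12 c21 c22 where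
      c: "c11 \<in> gamma_carrier (lex_le le) (1,0)" "c12 \<in> gamma_carrier (lex_le le) (1,0)"
     "c21 \<in> gamma_carrier (lex_le le) (1,0)" "c22 \<in> gamma_carrier (lex_le le) (1,0)"
     "c11+c12=a1" "c21+c22=a2" "c11+c21=b1" "c12+c22=b2"
     and d: "(fst c12 = 0 \<and> fst c21 = 0 \<and>
      (\<forall>x y. le 0 x \<longrightarrow> le x (snd c12) \<longrightarrow> le 0 y \<longrightarrow> le y (snd c21) \<longrightarrow> x + y = y + x))
      \<or> c12 = 0 \<or> c21 = 0" by metis
    have cm: "\<forall>x\<in>gamma_carrier (lex_le le) (1, 0). \<forall>y\<in>gamma_carrier (lex_le le) (1, 0).
        pea_le (gamma_carrier (lex_le le) (1, 0)) (gamma_add (lex_le le) (1, 0)) x c12 \<longrightarrow>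
        pea_le (gamma_carrier (lex_le le) (1, 0)) (gamma_add (lex_le le) (1, 0)) y c21 \<longrightarrow>
        gamma_add (lex_le le) (1, 0) x y \<noteq> None \<and>
        gamma_add (lex_le le) (1, 0) x y = gamma_add (lex_le le) (1, 0) y x"
      by (intro ballI impI, rule comm[OF assms(1) d]; assumption)
    show "\<exists>c11\<in>gamma_carrier (lex_le le) (1, 0). \<exists>c12\<in>gamma_carrier (lex_le le) (1, 0).
       \<exists>c21\<in>gamma_carrier (lex_le le) (1, 0). \<exists>c22\<in>gamma_carrier (lex_le le) (1, 0).
         gamma_add (lex_le le) (1, 0) c11 c12 = Some a1 \<and> gamma_add (lex_le le) (1, 0) c21 c22 = Some a2 \<and>
         gamma_add (lex_le le) (1, 0) c11 c21 = Some b1 \<and> gamma_add (lex_le le) (1, 0) c12 c22 = Some b2 \<and>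
         (\<forall>x\<in>gamma_carrier (lex_le le) (1, 0). \<forall>y\<in>gamma_carrier (lex_le le) (1, 0).
            pea_le (gamma_carrier (lex_le le) (1, 0)) (gamma_add (lex_le le) (1, 0)) x c12 \<longrightarrow>
            pea_le (gamma_carrier (lex_le le) (1, 0)) (gamma_add (lex_le le) (1, 0)) y c21 \<longrightarrow>
            gamma_add (lex_le le) (1, 0) x y \<noteq> None \<and>
            gamma_add (lex_le le) (1, 0) x y = gamma_add (lex_le le) (1, 0) y x)"
      using c(1-4) padd_intro[OF m(1) c(5)] padd_intro[OF m(2) c(6)]
        padd_intro[OF m(3) c(7)] padd_intro[OF m(4) c(8)] cm by blast
  qed
qed

end
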